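(* Let $n\ge 3$. The wheel $W_n$ is H--cordial if and only if $n$ is odd.
   Context: The wheel $W_n$ has vertex set $\{v_0,v_1,\dots,v_n\}$ and edges $v_0v_i$ for $1\le i\le n$ together with the cycle edges $v_iv_{i+1}$ for $1\le i\le n$ (indices with $v_{n+1}=v_1$); so $v_0$ has degree $n$. A labeling of a graph $G$ is a map $f:E(G)\to\{-1,+1\}$; for each vertex $v$ set $f(v)=\sum_{e\in I(v)} f(e)$, where $I(v)$ is the set of edges incident to $v$. For an integer $c$, $e_f(c)$ is the number of edges with label $c$ and $v_f(c)$ the number of vertices $v$ with $f(v)=c$. A labeling $f$ is H--cordial if there is a positive constant $K$ such that $|f(v)|=K$ for every vertex $v$, $|e_f(1)-e_f(-1)|\le 1$, and $|v_f(K)-v_f(-K)|\le 1$. A graph is H--cordial if it admits an H--cordial labeling. *)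

theory Defs
  imports Main
begin

text \<open>A simple graph is given by a vertex set V and an edge set E, each edge
being a 2-element subset of V. A labeling is a map from edges to {-1,+1}.\<close>

definition vertex_label :: "'a set set \<Rightarrow> ('a set \<Rightarrow> int) \<Rightarrow> 'a \<Rightarrow> int" where
  "vertex_label E f v = (\<Sum>e\<in>{e\<in>E. v \<in> e}. f e)"

definition e_count :: "'a set set \<Rightarrow> ('a set \<Rightarrow> int) \<Rightarrow> int \<Rightarrow> int" where
  "e_count E f c = int (card {e\<in>E. f e = c})"

definition v_count :: "'a set \<Rightarrow> 'a set set \<Rightarrow> ('a set \<Rightarrow> int) \<Rightarrow> int \<Rightarrow> int" where
  "v_count V E f c = int (card {v\<in>V. vertex_label E f v = c})"

definition is_labeling :: "'a set set \<Rightarrow> ('a set \<Rightarrow> int) \<Rightarrow> bool" where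
  "is_labeling E f \<longleftrightarrow> (\<forall>e\<in>E. f e = 1 \<or> f e = -1)"

definition H_cordial_labeling :: "'a set \<Rightarrow> 'a set set \<Rightarrow> ('a set \<Rightarrow> int) \<Rightarrow> bool" where
  "H_cordial_labeling V E f \<longleftrightarrow> is_labeling E f \<and>
     (\<exists>K::int. K > 0 \<and> (\<forall>v\<in>V. \<bar>vertex_label E f v\<bar> = K) \<and>
        \<bar>e_count E f 1 - e_count E f (-1)\<bar> \<le> 1 \<and>
        \<bar>v_count V E f K - v_count V E f (-K)\<bar> \<le> 1)"

definition H_cordial :: "'a set \<Rightarrow> 'a set set \<Rightarrow> bool" where
  "H_cordial V E \<longleftrightarrow> (\<exists>f. H_cordial_labeling V E f)"

text \<open>Wheel W_n: hub 0, rim vertices 1..n, spokes {0,i}, rim edges {i, i+1} with n+1 = 1.\<close>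

definition wheel_vertices :: "nat \<Rightarrow> nat set" where
  "wheel_vertices n = {0..n}"

definition wheel_edges :: "nat \<Rightarrow> nat set set" where
  "wheel_edges n = (\<lambda>i. {0, i}) ` {1..n} \<union> (\<lambda>i. {i, i mod n + 1}) ` {1..n}"

end

theory Submission
  imports Defs
begin

lemma card_diff_sum:
  assumes "finite S" "\<forall>x\<in>S. g x = 1 \<or> g x = (-1::int)"
  shows "int (card {x\<in>S. g x = 1}) - int (card {x\<in>S. g x = -1}) = sum g S"
  using assms
proof (induction S rule: finite_induct)
  case empty
  then show ?case by simp
next
  case (insert x F)
  have e1: "{y\<in>insert x F. g y = 1} = (if g x = 1 then insert x {y\<in>F. g y = 1} else {y\<in>F. g y = 1})" by auto
  have e2: "{y\<in>insert x F. g y = -1} = (if g x = -1 then insert x {y\<in>F. g y = -1} else {y\<in>F. g y = -1})" by auto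
  have fin: "finite {y\<in>F. g y = 1}" "finite {y\<in>F. g y = -1}" using insert by auto
  have nx: "x \<notin> {y\<in>F. g y = 1}" "x \<notin> {y\<in>F. g y = -1}" using insert by auto
  have gx: "g x = 1 \<or> g x = -1" using insert by auto
  then show ?case
  proof
    assume h: "g x = 1"
    then have "g x \<noteq> -1" by simp
    then show ?thesis unfolding e1 e2 using h fin nx insert by simp
  next
    assume h: "g x = -1"
    then have "g x \<noteq> 1" by simp
    then show ?thesis unfolding e1 e2 using h fin nx insert by simp
  qed
qed

lemma sum_pm_parity:
  assumes "finite S" "\<forall>x\<in>S. g x = 1 \<or> g x = (-1::int)"
  shows "even (sum g S) \<longleftrightarrow> even (card S)"
  using assms
proof (induction S rule: finite_induct)
  case empty
  then show ?case by simp
next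
  case (insert x F)
  then show ?case by auto
qed

definition s :: "nat \<Rightarrow> int" where "s k = (if odd k then 1 else -1)"

lemma s_sum_even: "(\<Sum>i\<in>{1..2*m}. s i) = 0"
proof (induction m)
  case 0
  then show ?case by simp
next
  case (Suc m)
  have "{1..2*Suc m} = insert (2*m+2) (insert (2*m+1) {1..2*m})" by auto
  then show ?case using Suc by (simp add: s_def)
qed

lemma s_sum_odd: "(\<Sum>i\<in>{1..2*m+1}. s i) = 1"
proof -
  have "{1..2*m+1} = insert (2*m+1) {1..2*m}" by auto
  then show ?thesis using s_sum_even[of m] by (simp add: s_def)
qed

definition sc :: "nat \<Rightarrow> nat \<Rightarrow> nat" where "sc n i = (if i = n then 1 else i + 1)"
definition pr :: "nat \<Rightarrow> nat \<Rightarrow> nat" where "pr n i = (if i = 1 then n else i - 1)"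

lemma wheel_edges_alt:
  "wheel_edges n = (\<lambda>i. {0, i}) ` {1..n} \<union> (\<lambda>i. {i, sc n i}) ` {1..n}"
proof -
  have "(\<lambda>i. {i, i mod n + 1}) ` {1..n} = (\<lambda>i. {i, sc n i}) ` {1..n}"
    by (rule image_cong) (auto simp: sc_def)
  then show ?thesis unfolding wheel_edges_def by simp
qed

lemma hub_inc: "{e \<in> wheel_edges n. (0::nat) \<in> e} = (\<lambda>i. {0, i}) ` {1..n}"
  unfolding wheel_edges_alt by (auto simp: sc_def)

lemma rim_inc:
  assumes "n \<ge> 3" "1 \<le> i" "i \<le> n"
  shows "{e \<in> wheel_edges n. i \<in> e} = {{0,i}, {i, sc n i}, {pr n i, i}}"
proof
  show "{e \<in> wheel_edges n. i \<in> e} \<subseteq> {{0,i}, {i, sc n i}, {pr n i, i}}"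
  proof
    fix e assume "e \<in> {e \<in> wheel_edges n. i \<in> e}"
    then have e: "e \<in> wheel_edges n" "i \<in> e" by auto
    then consider (a) k where "k \<in> {1..n}" "e = {0,k}" | (b) k where "k \<in> {1..n}" "e = {k, sc n k}"
      unfolding wheel_edges_alt by blast
    then show "e \<in> {{0,i}, {i, sc n i}, {pr n i, i}}"
    proof cases
      case a
      then have "i \<in> {0,k}" using e by simp
      then have "k = i" using assms by simp
      then have "e = {0,i}" using a by simp
      then show ?thesis by blast
    next
      case b
      then have "k = i \<or> sc n k = i" using e by blast
      then show ?thesis
      proof
        assume "k = i" then have "e = {i, sc n i}" using b by simp
        then show ?thesis by blast
      next
        assume h: "sc n k = i"
        have "k = pr n i" using h b(1) assms unfolding sc_def pr_def
          by (cases "k = n") auto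
        then have "e = {pr n i, i}" using b h by (simp add: insert_commute)
        then show ?thesis by blast
      qed
    qed
  qed
next
  show "{{0,i}, {i, sc n i}, {pr n i, i}} \<subseteq> {e \<in> wheel_edges n. i \<in> e}"
  proof -
    have "i \<in> {1..n}" using assms by simp
    then have "{0,i} \<in> wheel_edges n"
      unfolding wheel_edges_alt by (rule UnI1[OF imageI])
    moreover have "{i, sc n i} \<in> wheel_edges n"
      using \<open>i \<in> {1..n}\<close> unfolding wheel_edges_alt by (rule UnI2[OF imageI])
    moreover have "pr n i \<in> {1..n}" "sc n (pr n i) = i" using assms by (auto simp: sc_def pr_def)
    then have "{pr n i, i} \<in> wheel_edges n" unfolding wheel_edges_alt
      by (intro UnI2 image_eqI[where x="pr n i"]) (simp_all add: insert_commute)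
    ultimately show ?thesis by blast
  qed
qed

lemma rim_label:
  assumes "n \<ge> 3" "1 \<le> i" "i \<le> n"
  shows "vertex_label (wheel_edges n) f i = f {0,i} + f {i, sc n i} + f {pr n i, i}"
proof -
  have d1: "{0,i} \<noteq> {i, sc n i}" "{0,i} \<noteq> {pr n i, i}" "{i, sc n i} \<noteq> {pr n i, i}"
  proof -
    have a: "sc n i \<ge> 1" "pr n i \<ge> 1" "sc n i \<noteq> i" "sc n i \<noteq> pr n i"
      using assms unfolding sc_def pr_def by auto
    have "0 \<notin> {i, sc n i}" "0 \<notin> {pr n i, i}" "sc n i \<notin> {pr n i, i}" using a assms by auto
    then show "{0,i} \<noteq> {i, sc n i}" "{0,i} \<noteq> {pr n i, i}" "{i, sc n i} \<noteq> {pr n i, i}"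
      by blast+
  qed
  show ?thesis unfolding vertex_label_def rim_inc[OF assms] using d1 by simp
qed

lemma hub_label:
  "vertex_label (wheel_edges n) f 0 = (\<Sum>i\<in>{1..n}. f {0,i})"
proof -
  have "inj_on (\<lambda>i. {0::nat, i}) {1..n}" by (auto simp: inj_on_def doubleton_eq_iff)
  then show ?thesis unfolding vertex_label_def hub_inc by (simp add: sum.reindex)
qed

lemma only_if:
  assumes n3: "n \<ge> 3" and H: "H_cordial (wheel_vertices n) (wheel_edges n)"
  shows "odd n"
proof (rule ccontr)
  assume ev: "\<not> odd n"
  from H obtain f K where lab: "is_labeling (wheel_edges n) f" and
    K: "\<forall>v\<in>wheel_vertices n. \<bar>vertex_label (wheel_edges n) f v\<bar> = K"
    unfolding H_cordial_def H_cordial_labeling_def by blast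
  have pm: "\<forall>e\<in>wheel_edges n. f e = 1 \<or> f e = -1" using lab unfolding is_labeling_def by blast
  have spk: "\<forall>i\<in>{1..n}. f {0,i} = 1 \<or> f {0,i} = -1"
    using pm unfolding wheel_edges_alt by auto
  have "even (\<Sum>i\<in>{1..n}. f {0,i})"
    using sum_pm_parity[of "{1..n}" "\<lambda>i. f {0,i}"] spk ev by simp
  then have e0: "even (vertex_label (wheel_edges n) f 0)" by (simp add: hub_label)
  have in1: "{0,1} \<in> wheel_edges n" "{1, sc n 1} \<in> wheel_edges n" "{pr n 1, 1} \<in> wheel_edges n"
    using rim_inc[OF n3, of 1] n3 by auto
  have l1: "vertex_label (wheel_edges n) f 1 = f {0,1} + f {1, sc n 1} + f {pr n 1, 1}"
    using rim_label[OF n3, of 1] n3 by simp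
  have o1: "odd (vertex_label (wheel_edges n) f 1)"
    unfolding l1 using pm in1 by (metis (no_types, lifting) even_add even_minus odd_one)
  have "0 \<in> wheel_vertices n" "1 \<in> wheel_vertices n" using n3 by (auto simp: wheel_vertices_def)
  then have "\<bar>vertex_label (wheel_edges n) f 0\<bar> = \<bar>vertex_label (wheel_edges n) f 1\<bar>" using K by simp
  then show False using e0 o1 by (metis even_abs_add_iff add.right_neutral abs_zero)
qed

definition FF :: "nat set \<Rightarrow> int" where
  "FF e = (if 0 \<in> e then s (Max e) else - s (Min e))"

lemma FF_spoke: "i \<ge> 1 \<Longrightarrow> FF {0,i} = s i"
  by (simp add: FF_def)

lemma FF_rim:
  assumes "odd n" "n \<ge> 3" "1 \<le> i" "i \<le> n"
  shows "FF {i, sc n i} = - s i"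
  using assms by (auto simp: FF_def sc_def s_def)

lemma FF_rim_pr:
  assumes "odd n" "n \<ge> 3" "1 \<le> i" "i \<le> n"
  shows "FF {pr n i, i} = (if i = 1 then -1 else - s (i - 1))"
  using assms by (auto simp: FF_def pr_def s_def min_def)

lemma FF_label:
  assumes "odd n" "n \<ge> 3" "1 \<le> i" "i \<le> n"
  shows "vertex_label (wheel_edges n) FF i = (if i = 1 then -1 else - s (i - 1))"
proof -
  have "vertex_label (wheel_edges n) FF i = s i - s i + (if i = 1 then -1 else - s (i - 1))"
    using rim_label[OF assms(2-4), of FF] FF_spoke[of i] FF_rim[OF assms] FF_rim_pr[OF assms] assms
    by simp
  then show ?thesis by simp
qed

lemma if_dir:
  assumes n3: "n \<ge> 3" and od: "odd n"
  shows "H_cordial (wheel_vertices n) (wheel_edges n)"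
proof -
  obtain m where m: "n = 2*m+1" using od oddE by blast
  let ?E = "wheel_edges n"
  let ?A = "(\<lambda>i. {0::nat, i}) ` {1..n}"
  let ?B = "(\<lambda>i. {i, sc n i}) ` {1..n}"
  have s_pm: "s k = 1 \<or> s k = -1" for k by (simp add: s_def)
  have lab: "is_labeling ?E FF" unfolding is_labeling_def
  proof
    fix e show "FF e = 1 \<or> FF e = -1" unfolding FF_def using s_pm[of "Max e"] s_pm[of "Min e"] by auto
  qed
  have finE: "finite ?E" unfolding wheel_edges_alt by simp
  have hub: "vertex_label ?E FF 0 = 1"
  proof -
    have "vertex_label ?E FF 0 = (\<Sum>i\<in>{1..n}. s i)" unfolding hub_label
      by (rule sum.cong) (auto simp: FF_spoke)
    then show ?thesis using s_sum_odd[of m] m by simp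
  qed
  have rim: "vertex_label ?E FF i = (if i = 1 then -1 else - s (i - 1))" if "1 \<le> i" "i \<le> n" for i
    using FF_label[OF od n3 that] .
  have absl: "\<forall>v\<in>wheel_vertices n. \<bar>vertex_label ?E FF v\<bar> = 1"
  proof
    fix v assume "v \<in> wheel_vertices n"
    then have "v = 0 \<or> (1 \<le> v \<and> v \<le> n)" by (auto simp: wheel_vertices_def)
    then show "\<bar>vertex_label ?E FF v\<bar> = 1" using hub rim by (auto simp: s_def)
  qed
  have sumE: "sum FF ?E = 0"
  proof -
    have disj: "?A \<inter> ?B = {}"
    proof -
      have z: "0 \<notin> {i, sc n i}" if "1 \<le> i" for i using that by (auto simp: sc_def)
      have "0 \<in> x" if "x \<in> ?A" for x using that by blast
      moreover have "0 \<notin> x" if "x \<in> ?B" for x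
      proof -
        from that obtain i where "i \<in> {1..n}" "x = {i, sc n i}" by blast
        then show ?thesis using z[of i] by simp
      qed
      ultimately show ?thesis by blast
    qed
    have injA: "inj_on (\<lambda>i. {0::nat, i}) {1..n}" by (auto simp: inj_on_def doubleton_eq_iff)
    have injB: "inj_on (\<lambda>i. {i, sc n i}) {1..n}"
    proof (rule inj_onI)
      fix i j assume ij: "i \<in> {1..n}" "j \<in> {1..n}" "{i, sc n i} = {j, sc n j}"
      then have "(i = j \<and> sc n i = sc n j) \<or> (i = sc n j \<and> sc n i = j)"
        by (simp add: doubleton_eq_iff)
      moreover have "\<not> (i = sc n j \<and> sc n i = j)"
      proof
        assume h: "i = sc n j \<and> sc n i = j"
        then have "sc n (sc n j) = j" by metis
        then show False using ij(2) n3 unfolding sc_def by (auto split: if_splits)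
      qed
      ultimately show "i = j" by blast
    qed
    have sA: "sum FF ?A = 1"
    proof -
      have "sum FF ?A = (\<Sum>i\<in>{1..n}. s i)" using injA
        by (simp add: sum.reindex FF_spoke)
      then show ?thesis using s_sum_odd[of m] m by simp
    qed
    have sB: "sum FF ?B = -1"
    proof -
      have "sum FF ?B = (\<Sum>i\<in>{1..n}. FF {i, sc n i})" using injB
        by (simp add: sum.reindex)
      also have "\<dots> = (\<Sum>i\<in>{1..n}. - s i)"
        by (rule sum.cong) (auto simp: FF_rim[OF od n3])
      also have "\<dots> = -1" using s_sum_odd[of m] m by (simp add: sum_negf)
      finally show ?thesis .
    qed
    have "sum FF ?E = sum FF ?A + sum FF ?B" unfolding wheel_edges_alt
      by (rule sum.union_disjoint) (simp_all only: disj finite_imageI finite_atLeastAtMost)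
    then show ?thesis using sA sB by simp
  qed
  have ecount: "e_count ?E FF 1 - e_count ?E FF (-1) = 0"
  proof -
    have pmE: "\<forall>e\<in>?E. FF e = 1 \<or> FF e = -1" using lab unfolding is_labeling_def .
    show ?thesis unfolding e_count_def using card_diff_sum[OF finE pmE] sumE by linarith
  qed
  have sumV: "sum (vertex_label ?E FF) (wheel_vertices n) = 0"
  proof -
    let ?g = "vertex_label ?E FF"
    have V: "wheel_vertices n = insert 0 {1..n}" unfolding wheel_vertices_def by auto
    have r1: "{1..n} = insert 1 {2..n}" using n3 by auto
    have s1: "sum ?g {1..n} = ?g 1 + sum ?g {2..n}" unfolding r1 by (rule sum.insert) auto
    have g1: "?g 1 = -1" using rim[of 1] n3 by simp
    have s2: "sum ?g {2..n} = (\<Sum>i\<in>{2..n}. - s (i - 1))"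
      by (rule sum.cong) (auto simp: rim)
    have s3: "(\<Sum>i\<in>{2..n}. - s (i - 1)) = (\<Sum>k\<in>{1..2*m}. - s k)"
    proof -
      have "(\<Sum>i\<in>{Suc 1..Suc (2*m)}. - s (i - 1)) = (\<Sum>k\<in>{1..2*m}. - s (Suc k - 1))"
        by (rule sum.shift_bounds_cl_Suc_ivl)
      also have "\<dots> = (\<Sum>k\<in>{1..2*m}. - s k)" by (simp only: diff_Suc_1)
      finally have a: "(\<Sum>i\<in>{Suc 1..Suc (2*m)}. - s (i - 1)) = (\<Sum>k\<in>{1..2*m}. - s k)" .
      have b: "{Suc 1..Suc (2*m)} = {2..n}" using m by auto
      show ?thesis using a unfolding b .
    qed
    have s4: "(\<Sum>k\<in>{1..2*m}. - s k) = 0" using s_sum_even[of m] by (simp add: sum_negf)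
    have "sum ?g (wheel_vertices n) = ?g 0 + sum ?g {1..n}" unfolding V by (rule sum.insert) auto
    then show ?thesis using hub s1 g1 s2 s3 s4 by linarith
  qed
  have vfin: "finite (wheel_vertices n)" by (simp add: wheel_vertices_def)
  have vpm: "\<forall>v\<in>wheel_vertices n. vertex_label ?E FF v = 1 \<or> vertex_label ?E FF v = -1"
  proof
    fix v assume "v \<in> wheel_vertices n"
    then have "\<bar>vertex_label ?E FF v\<bar> = 1" using absl by blast
    then show "vertex_label ?E FF v = 1 \<or> vertex_label ?E FF v = -1" by linarith
  qed
  have vcount: "v_count (wheel_vertices n) ?E FF 1 - v_count (wheel_vertices n) ?E FF (-1) = 0"
    unfolding v_count_def using card_diff_sum[OF vfin vpm] sumV by linarith
  have "H_cordial_labeling (wheel_vertices n) ?E FF"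
    unfolding H_cordial_labeling_def
  proof (intro conjI exI[of _ 1])
    show "is_labeling ?E FF" by (rule lab)
    show "(0::int) < 1" by simp
    show "\<forall>v\<in>wheel_vertices n. \<bar>vertex_label ?E FF v\<bar> = 1" by (rule absl)
    show "\<bar>e_count ?E FF 1 - e_count ?E FF (-1)\<bar> \<le> 1" using ecount by simp
    show "\<bar>v_count (wheel_vertices n) ?E FF 1 - v_count (wheel_vertices n) ?E FF (-1)\<bar> \<le> 1" using vcount by simp
  qed
  then show ?thesis unfolding H_cordial_def by blast
qed

theorem theorem4:
  fixes n :: nat
  assumes "n \<ge> 3"
  shows "H_cordial (wheel_vertices n) (wheel_edges n) \<longleftrightarrow> odd n"
  using only_if[OF assms] if_dir[OF assms] by blast

end
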